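(* Let $\mathcal{A}$ be a finite set of hyperplanes through $0$ in a complex vector space $V_{\mathbb{C}}$, let $H\in\mathcal{A}$, and let $\sigma$ be an ordering of $\mathcal{A}$ compatible with $H$. Then for every $k\ge 1$, $$\mathrm{BCB}^k_\sigma(\mathcal{A})=\mathrm{BCB}^k_{\sigma\setminus H}(\mathcal{A}\setminus\{H\})\ \cup\ \big\{(l_\sigma(K_1),\dots,l_\sigma(K_{k-1}),H)\ :\ (K_1,\dots,K_{k-1})\in \mathrm{BCB}^{k-1}_{\sigma|H}(\mathcal{A}|H)\big\}.$$
   Context: For an arrangement $\mathcal{B}$ (finite set of hyperplanes through $0$ in a vector space), a set of its hyperplanes is independent if their defining linear forms (on the ambient space of $\mathcal{B}$) are linearly independent; $\mathrm{Or}^k(\mathcal{B})$ is the set of ordered independent $k$-tuples of elements of $\mathcal{B}$; an ordering is a bijection $\tau:\mathcal{B}\to\{1,\dots,|\mathcal{B}|\}$; and $\mathrm{BCB}^k_\tau(\mathcal{B})$ is the set of $S=(H_1,\dots,H_k)\in\mathrm{Or}^k(\mathcal{B})$ with $\tau(H_1)<\dots<\tau(H_k)$ such that for every $G\in\mathcal{B}$ not among the $H_i$, the set $\{G\}\cup\{H_i:\tau(H_i)>\tau(G)\}$ is independent. By convention $\mathrm{BCB}^0$ consists of the empty tuple. Given $H\in\mathcal{A}$: $\mathcal{A}\setminus\{H\}$ is the deleted arrangement in $V_{\mathbb{C}}$; $\mathcal{A}|H=\{H'\cap H: H'\in\mathcal{A}\setminus\{H\}\}$ is the arrangement of hyperplanes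 in $H$ (as a set of distinct subspaces); $\pi:\mathcal{A}\setminus\{H\}\to\mathcal{A}|H$, $H'\mapsto H'\cap H$. An ordering $\sigma$ of $\mathcal{A}$ is compatible with $H$ if (1) $\sigma(H)=|\mathcal{A}|$ and (2) whenever $H_1\cap H=H_3\cap H$ and $\sigma(H_1)<\sigma(H_2)<\sigma(H_3)$, then $H_1\cap H=H_2\cap H$. Then $\sigma\setminus H$ is the restriction of the order $\sigma$ to $\mathcal{A}\setminus\{H\}$, $\sigma|H$ is the induced ordering of $\mathcal{A}|H$ (well defined because by (2) each fiber of $\pi$ is an interval for $\sigma$; $K<K'$ iff the fiber over $K$ precedes the fiber over $K'$), and $l_\sigma:\mathcal{A}|H\to\mathcal{A}\setminus\{H\}$ sends $K$ to the element $H''$ with $\pi(H'')=K$ having the least $\sigma$-value. *)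

theory Defs
  imports "HOL-Analysis.Analysis"
begin

text \<open>A linear form on V
is given by its coefficient vector c, acting as x \<mapsto> sum_i c_i x_i; every linear
form on a subspace W extends to V, so linear forms on W are restrictions of these.\<close>

definition lform :: "complex^'n \<Rightarrow> complex^'n \<Rightarrow> complex" where
  "lform c x = (\<Sum>i\<in>UNIV. c $ i * x $ i)"

definition defining_form :: "(complex^'n) set \<Rightarrow> complex^'n \<Rightarrow> (complex^'n) set \<Rightarrow> bool" where
  "defining_form W c K \<longleftrightarrow> K = {x \<in> W. lform c x = 0} \<and> (\<exists>x\<in>W. lform c x \<noteq> 0)"

definition hyperplane_of :: "(complex^'n) set \<Rightarrow> (complex^'n) set \<Rightarrow> bool" where
  "hyperplane_of W K \<longleftrightarrow> (\<exists>c. defining_form W c K)"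

definition indep_hyps :: "(complex^'n) set \<Rightarrow> (complex^'n) set set \<Rightarrow> bool" where
  "indep_hyps W S \<longleftrightarrow> finite S \<and> (\<exists>c. (\<forall>K\<in>S. defining_form W (c K) K) \<and>
     (\<forall>a. (\<forall>x\<in>W. (\<Sum>K\<in>S. a K * lform (c K) x) = 0) \<longrightarrow> (\<forall>K\<in>S. a K = 0)))"

definition is_arrangement :: "(complex^'n) set \<Rightarrow> (complex^'n) set set \<Rightarrow> bool" where
  "is_arrangement W B \<longleftrightarrow> subspace W \<and> finite B \<and> (\<forall>K\<in>B. hyperplane_of W K)"

definition is_ordering :: "('a \<Rightarrow> nat) \<Rightarrow> 'a set \<Rightarrow> bool" where
  "is_ordering \<tau> B \<longleftrightarrow> bij_betw \<tau> B {1..card B}"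

definition Or :: "nat \<Rightarrow> (complex^'n) set \<Rightarrow> (complex^'n) set set \<Rightarrow> (complex^'n) set list set" where
  "Or k W B = {S. length S = k \<and> distinct S \<and> set S \<subseteq> B \<and> indep_hyps W (set S)}"

definition BCB :: "nat \<Rightarrow> ((complex^'n) set \<Rightarrow> nat) \<Rightarrow> (complex^'n) set \<Rightarrow> (complex^'n) set set
     \<Rightarrow> (complex^'n) set list set" where
  "BCB k \<tau> W B = (if k = 0 then {[]} else
     {S \<in> Or k W B. sorted_wrt (\<lambda>x y. \<tau> x < \<tau> y) S \<and>
        (\<forall>G\<in>B - set S. indep_hyps W ({G} \<union> {Hi \<in> set S. \<tau> Hi > \<tau> G}))})"

definition restr_arr :: "(complex^'n) set set \<Rightarrow> (complex^'n) set \<Rightarrow> (complex^'n) set set" where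
  "restr_arr A H = (\<lambda>H'. H' \<inter> H) ` (A - {H})"

definition compatible :: "((complex^'n) set \<Rightarrow> nat) \<Rightarrow> (complex^'n) set set \<Rightarrow> (complex^'n) set \<Rightarrow> bool" where
  "compatible \<sigma> A H \<longleftrightarrow> \<sigma> H = card A \<and>
     (\<forall>H1\<in>A. \<forall>H2\<in>A. \<forall>H3\<in>A. H1 \<inter> H = H3 \<inter> H \<and> \<sigma> H1 < \<sigma> H2 \<and> \<sigma> H2 < \<sigma> H3
        \<longrightarrow> H1 \<inter> H = H2 \<inter> H)"

definition lift_min :: "((complex^'n) set \<Rightarrow> nat) \<Rightarrow> (complex^'n) set set \<Rightarrow> (complex^'n) set
     \<Rightarrow> (complex^'n) set \<Rightarrow> (complex^'n) set" where
  "lift_min \<sigma> A H K = (ARG_MIN \<sigma> H''. H'' \<in> A - {H} \<and> H'' \<inter> H = K)"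

text \<open>sigma|H: the induced ordering of A|H (fibres are ordered as intervals of sigma;
the rank of K equals the rank of its least element l_sigma K).\<close>
definition induced_ord :: "((complex^'n) set \<Rightarrow> nat) \<Rightarrow> (complex^'n) set set \<Rightarrow> (complex^'n) set
     \<Rightarrow> (complex^'n) set \<Rightarrow> nat" where
  "induced_ord \<sigma> A H K =
     card {K' \<in> restr_arr A H. \<sigma> (lift_min \<sigma> A H K') \<le> \<sigma> (lift_min \<sigma> A H K)}"

end

theory Submission
  imports Defs
begin

definition linf :: "(complex^'n \<Rightarrow> complex) \<Rightarrow> bool" where
  "linf f \<longleftrightarrow> (\<forall>x y t. f (x - t *s y) = f x - t * f y)"

lemma linf_lform: "linf (lform c)"
  unfolding linf_def lform_def
  by (simp add: algebra_simps sum_subtractf sum_distrib_left)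

lemma linf_sum: "(\<And>K. K \<in> S \<Longrightarrow> linf (f K)) \<Longrightarrow> linf (\<lambda>x. \<Sum>K\<in>S. a K * f K x)"
  unfolding linf_def
proof (intro allI)
  fix x y t
  assume h: "\<And>K. K \<in> S \<Longrightarrow> (\<forall>x y t. f K (x - t *s y) = f K x - t * f K y)"
  have "(\<Sum>K\<in>S. a K * f K (x - t *s y)) = (\<Sum>K\<in>S. a K * f K x - t * (a K * f K y))"
    by (rule sum.cong) (auto simp: h right_diff_distrib)
  thus "(\<Sum>K\<in>S. a K * f K (x - t *s y)) = (\<Sum>K\<in>S. a K * f K x) - t * (\<Sum>K\<in>S. a K * f K y)"
    by (simp add: sum_subtractf sum_distrib_left)
qed

lemma linf_diff: "linf f \<Longrightarrow> linf g \<Longrightarrow> linf (\<lambda>x. g x - l * f x)"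
  unfolding linf_def by (simp add: right_diff_distrib)

definition closedW :: "(complex^'n) set \<Rightarrow> bool" where
  "closedW W \<longleftrightarrow> (\<forall>x\<in>W. \<forall>y\<in>W. \<forall>t. x - t *s y \<in> W)"

lemma closedW_UNIV: "closedW UNIV" by (simp add: closedW_def)

lemma closedW_ker: "closedW {x. lform c x = 0}"
  using linf_lform[of c] unfolding closedW_def linf_def by simp

lemma prop_form:
  assumes "linf f" "linf g" "closedW W" "x0 \<in> W" "f x0 \<noteq> 0"
    and "\<forall>x\<in>W. f x = 0 \<longrightarrow> g x = 0" "x \<in> W"
  shows "g x = (g x0 / f x0) * f x"
proof -
  define y where "y = x - (f x / f x0) *s x0"
  have yW: "y \<in> W" using assms unfolding closedW_def y_def by blast
  have "f y = 0" using assms(1,5) unfolding linf_def y_def by simp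
  hence "g y = 0" using assms(6) yW by blast
  hence "g x - (f x / f x0) * g x0 = 0" using assms(2) unfolding linf_def y_def by simp
  thus ?thesis using assms(5) by (simp add: field_simps)
qed

lemma def_ne:
  assumes "defining_form W c K"
  obtains x0 where "x0 \<in> W" "lform c x0 \<noteq> 0"
  using assms unfolding defining_form_def by blast

lemma indep_any:
  assumes ind: "indep_hyps W S" and cl: "closedW W"
    and d: "\<forall>K\<in>S. defining_form W (d K) K"
    and s0: "\<forall>x\<in>W. (\<Sum>K\<in>S. a K * lform (d K) x) = 0" and KS: "K \<in> S"
  shows "a K = 0"
proof -
  obtain c where c: "\<forall>K\<in>S. defining_form W (c K) K"
    and li: "\<forall>a. (\<forall>x\<in>W. (\<Sum>K\<in>S. a K * lform (c K) x) = 0) \<longrightarrow> (\<forall>K\<in>S. a K = 0)"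
    using ind unfolding indep_hyps_def by blast
  define x0 where "x0 K = (SOME x. x \<in> W \<and> lform (c K) x \<noteq> 0)" for K
  have x0: "x0 K \<in> W \<and> lform (c K) (x0 K) \<noteq> 0" if "K \<in> S" for K
    unfolding x0_def by (rule someI_ex) (use c that in \<open>auto simp: defining_form_def\<close>)
  define l where "l K = lform (d K) (x0 K) / lform (c K) (x0 K)" for K
  have eq: "lform (d K) x = l K * lform (c K) x" if "K \<in> S" "x \<in> W" for K x
    unfolding l_def
  proof (rule prop_form[OF linf_lform linf_lform cl])
    show "x0 K \<in> W" "lform (c K) (x0 K) \<noteq> 0" using x0 that by auto
    show "\<forall>x\<in>W. lform (c K) x = 0 \<longrightarrow> lform (d K) x = 0"
      using c d that unfolding defining_form_def by blast
  qed (rule that)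
  have lnz: "l K \<noteq> 0" if "K \<in> S" for K
  proof -
    have "x0 K \<notin> K" using x0[OF that] c that unfolding defining_form_def by blast
    hence "lform (d K) (x0 K) \<noteq> 0" using x0[OF that] d that unfolding defining_form_def by blast
    thus ?thesis using x0[OF that] unfolding l_def by simp
  qed
  have "\<forall>x\<in>W. (\<Sum>K\<in>S. (a K * l K) * lform (c K) x) = 0"
  proof
    fix x assume "x \<in> W"
    have "(\<Sum>K\<in>S. (a K * l K) * lform (c K) x) = (\<Sum>K\<in>S. a K * lform (d K) x)"
      by (rule sum.cong) (simp_all add: eq \<open>x \<in> W\<close>)
    thus "(\<Sum>K\<in>S. (a K * l K) * lform (c K) x) = 0" using s0 \<open>x \<in> W\<close> by simp
  qed
  hence "a K * l K = 0" using spec[OF li, of "\<lambda>K. a K * l K"] KS by auto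
  thus ?thesis using lnz[OF KS] by simp
qed

lemma indep_intro:
  assumes "finite S" "\<forall>K\<in>S. defining_form W (d K) K"
    "\<And>a. \<forall>x\<in>W. (\<Sum>K\<in>S. a K * lform (d K) x) = 0 \<Longrightarrow> \<forall>K\<in>S. a K = 0"
  shows "indep_hyps W S"
  unfolding indep_hyps_def using assms by blast

lemma indep_subset:
  assumes ind: "indep_hyps W S" and sub: "T \<subseteq> S"
  shows "indep_hyps W T"
proof -
  obtain c where c: "\<forall>K\<in>S. defining_form W (c K) K"
    and li: "\<forall>a. (\<forall>x\<in>W. (\<Sum>K\<in>S. a K * lform (c K) x) = 0) \<longrightarrow> (\<forall>K\<in>S. a K = 0)"
    and fin: "finite S"
    using ind unfolding indep_hyps_def by blast
  show ?thesis
  proof (rule indep_intro[where d=c])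
    show "finite T" using fin sub finite_subset by blast
    show "\<forall>K\<in>T. defining_form W (c K) K" using c sub by blast
    fix a assume h: "\<forall>x\<in>W. (\<Sum>K\<in>T. a K * lform (c K) x) = 0"
    define a' where "a' K = (if K \<in> T then a K else 0)" for K
    have "\<forall>x\<in>W. (\<Sum>K\<in>S. a' K * lform (c K) x) = 0"
    proof
      fix x assume x: "x \<in> W"
      have "(\<Sum>K\<in>S. a' K * lform (c K) x) = (\<Sum>K\<in>T. a' K * lform (c K) x)"
        by (rule sum.mono_neutral_right) (use fin sub in \<open>auto simp: a'_def\<close>)
      also have "\<dots> = (\<Sum>K\<in>T. a K * lform (c K) x)" by (rule sum.cong) (auto simp: a'_def)
      finally show "(\<Sum>K\<in>S. a' K * lform (c K) x) = 0" using h x by simp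
    qed
    hence "\<forall>K\<in>S. a' K = 0" using li by blast
    thus "\<forall>K\<in>T. a K = 0" using sub unfolding a'_def by (metis subsetD)
  qed
qed

lemma indep_single:
  assumes "defining_form W c K"
  shows "indep_hyps W {K}"
proof (rule indep_intro[where d="\<lambda>_. c"])
  obtain x0 where "x0 \<in> W" "lform c x0 \<noteq> 0" using assms by (rule def_ne)
  fix a assume "\<forall>x\<in>W. (\<Sum>K\<in>{K}. a K * lform c x) = 0"
  thus "\<forall>K\<in>{K}. a K = 0" using \<open>x0 \<in> W\<close> \<open>lform c x0 \<noteq> 0\<close> by auto
qed (use assms in auto)

lemma defUNIV: "defining_form UNIV c K \<Longrightarrow> K = {x. lform c x = 0}"
  unfolding defining_form_def by simp

lemma closedW_def_form: "defining_form UNIV c K \<Longrightarrow> closedW K"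
  using defUNIV closedW_ker by metis

lemma restr_def_form:
  assumes dG: "defining_form UNIV cG G" and dH: "defining_form UNIV cH H" and ne: "G \<noteq> H"
  shows "defining_form H cG (G \<inter> H)"
  unfolding defining_form_def
proof
  show "G \<inter> H = {x \<in> H. lform cG x = 0}" using defUNIV[OF dG] by auto
  show "\<exists>x\<in>H. lform cG x \<noteq> 0"
  proof (rule ccontr)
    assume "\<not> ?thesis"
    hence z: "\<forall>x\<in>H. lform cG x = 0" by blast
    obtain x0 where x0: "lform cH x0 \<noteq> 0" using dH by (rule def_ne)
    define l where "l = lform cG x0 / lform cH x0"
    have eq: "lform cG x = l * lform cH x" for x
      unfolding l_def
      by (rule prop_form[OF linf_lform linf_lform closedW_UNIV]) (use x0 z defUNIV[OF dH] in auto)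
    obtain x1 where "lform cG x1 \<noteq> 0" using dG by (rule def_ne)
    hence "l \<noteq> 0" using eq by auto
    hence "G = H" using defUNIV[OF dG] defUNIV[OF dH] eq by auto
    thus False using ne by simp
  qed
qed

lemma three_dep:
  assumes d1: "defining_form UNIV c1 G1" and d2: "defining_form UNIV c2 G2"
    and dH: "defining_form UNIV cH H"
    and ne: "G1 \<noteq> G2" "G1 \<noteq> H" "G2 \<noteq> H" and eqi: "G1 \<inter> H = G2 \<inter> H"
  shows "\<not> indep_hyps UNIV {G1, G2, H}"
proof
  assume ind: "indep_hyps UNIV {G1, G2, H}"
  have r1: "defining_form H c1 (G1 \<inter> H)" by (rule restr_def_form[OF d1 dH ne(2)])
  have r2: "defining_form H c2 (G1 \<inter> H)" using restr_def_form[OF d2 dH ne(3)] eqi by simp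
  obtain x0 where x0: "x0 \<in> H" "lform c1 x0 \<noteq> 0" using r1 by (rule def_ne)
  define l where "l = lform c2 x0 / lform c1 x0"
  have clH: "closedW H" using closedW_def_form[OF dH] .
  have e1: "lform c2 x = l * lform c1 x" if "x \<in> H" for x
    unfolding l_def
    by (rule prop_form[OF linf_lform linf_lform clH x0]) (use r1 r2 that in \<open>auto simp: defining_form_def\<close>)
  obtain y0 where y0: "lform cH y0 \<noteq> 0" using dH by (rule def_ne)
  define m where "m = (lform c2 y0 - l * lform c1 y0) / lform cH y0"
  have e2: "lform c2 x - l * lform c1 x = m * lform cH x" for x
    unfolding m_def
    by (rule prop_form[OF linf_lform linf_diff[OF linf_lform linf_lform] closedW_UNIV])
       (use y0 e1 defUNIV[OF dH] in auto)
  define d where "d K = (if K = G1 then c1 else if K = G2 then c2 else cH)" for K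
  define a where "a K = (if K = G1 then - l else if K = G2 then 1 else - m)" for K
  have "a G2 = 0"
  proof (rule indep_any[OF ind closedW_UNIV])
    show "\<forall>K\<in>{G1, G2, H}. defining_form UNIV (d K) K" using d1 d2 dH ne by (auto simp: d_def)
    show "\<forall>x\<in>UNIV. (\<Sum>K\<in>{G1, G2, H}. a K * lform (d K) x) = 0"
      using ne e2 by (auto simp: a_def d_def algebra_simps)
  qed simp
  thus False using ne by (simp add: a_def)
qed

lemma lift_indep:
  fixes H :: "(complex^'n) set"
  assumes hyp: "\<forall>G\<in>S'. hyperplane_of UNIV G" and hH: "hyperplane_of UNIV H"
    and nH: "H \<notin> S'" and fin: "finite S'" and inj: "inj_on (\<lambda>G. G \<inter> H) S'"
  shows "indep_hyps UNIV (insert H S') \<longleftrightarrow> indep_hyps H ((\<lambda>G. G \<inter> H) ` S')"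
proof -
  define cf where "cf G = (SOME c. defining_form UNIV c G)" for G :: "(complex^'n) set"
  have cfd: "defining_form UNIV (cf G) G" if "G \<in> insert H S'" for G
    unfolding cf_def by (rule someI_ex) (use hyp hH that in \<open>auto simp: hyperplane_of_def\<close>)
  define iv where "iv = the_inv_into S' (\<lambda>G. G \<inter> H)"
  have ivf: "iv (G \<inter> H) = G" if "G \<in> S'" for G
    unfolding iv_def using the_inv_into_f_f[OF inj that] by simp
  have rd: "defining_form H (cf G) (G \<inter> H)" if "G \<in> S'" for G
    using restr_def_form[OF cfd cfd] that nH by auto
  have clH: "closedW H" using closedW_def_form[OF cfd[of H]] by simp
  have Hk: "H = {x. lform (cf H) x = 0}" using defUNIV[OF cfd[of H]] by simp
  obtain y0 where y0: "lform (cf H) y0 \<noteq> 0" using cfd[of H] by (auto elim: def_ne)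
  have reidx: "(\<Sum>K\<in>(\<lambda>G. G \<inter> H) ` S'. h K) = (\<Sum>G\<in>S'. h (G \<inter> H))" for h :: "_ \<Rightarrow> complex"
    using sum.reindex[OF inj, of h] by simp
  show ?thesis
  proof
    assume ind: "indep_hyps UNIV (insert H S')"
    show "indep_hyps H ((\<lambda>G. G \<inter> H) ` S')"
    proof (rule indep_intro[where d="\<lambda>K. cf (iv K)"])
      show "finite ((\<lambda>G. G \<inter> H) ` S')" using fin by simp
      show "\<forall>K\<in>(\<lambda>G. G \<inter> H) ` S'. defining_form H (cf (iv K)) K" using rd ivf by auto
      fix a assume h: "\<forall>x\<in>H. (\<Sum>K\<in>(\<lambda>G. G \<inter> H) ` S'. a K * lform (cf (iv K)) x) = 0"
      define phi where "phi x = (\<Sum>G\<in>S'. a (G \<inter> H) * lform (cf G) x)" for x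
      have ph0: "phi x = 0" if "x \<in> H" for x
      proof -
        have "phi x = (\<Sum>K\<in>(\<lambda>G. G \<inter> H) ` S'. a K * lform (cf (iv K)) x)"
          unfolding phi_def reidx by (rule sum.cong) (auto simp: ivf)
        thus ?thesis using h that by simp
      qed
      define m where "m = phi y0 / lform (cf H) y0"
      have linphi: "linf phi" unfolding phi_def by (rule linf_sum) (rule linf_lform)
      have e: "phi x = m * lform (cf H) x" for x
        unfolding m_def
        by (rule prop_form[OF linf_lform linphi closedW_UNIV]) (use y0 ph0 Hk in auto)
      define b where "b G = (if G = H then - m else a (G \<inter> H))" for G
      have "b G = 0" if "G \<in> S'" for G
      proof (rule indep_any[OF ind closedW_UNIV])
        show "\<forall>K\<in>insert H S'. defining_form UNIV (cf K) K" using cfd by blast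
        show "G \<in> insert H S'" using that by simp
        show "\<forall>x\<in>UNIV. (\<Sum>K\<in>insert H S'. b K * lform (cf K) x) = 0"
        proof
          fix x :: "complex^'n"
          have "(\<Sum>K\<in>insert H S'. b K * lform (cf K) x) = - m * lform (cf H) x + phi x"
            using fin nH unfolding phi_def b_def
            by (simp add: sum.insert) (rule sum.cong, auto)
          thus "(\<Sum>K\<in>insert H S'. b K * lform (cf K) x) = 0" using e by simp
        qed
      qed
      thus "\<forall>K\<in>(\<lambda>G. G \<inter> H) ` S'. a K = 0" using nH unfolding b_def by (metis (no_types, lifting) imageE)
    qed
  next
    assume ind: "indep_hyps H ((\<lambda>G. G \<inter> H) ` S')"
    show "indep_hyps UNIV (insert H S')"
    proof (rule indep_intro[where d=cf])
      show "finite (insert H S')" using fin by simp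
      show "\<forall>K\<in>insert H S'. defining_form UNIV (cf K) K" using cfd by blast
      fix b assume h: "\<forall>x\<in>UNIV. (\<Sum>K\<in>insert H S'. b K * lform (cf K) x) = 0"
      have hs: "(\<Sum>K\<in>insert H S'. b K * lform (cf K) x) = b H * lform (cf H) x + (\<Sum>K\<in>S'. b K * lform (cf K) x)" for x
        using fin nH by simp
      have bS: "b G = 0" if "G \<in> S'" for G
      proof -
        have "(\<lambda>K. b (iv K)) (G \<inter> H) = 0"
        proof (rule indep_any[OF ind clH, where a="\<lambda>K. b (iv K)" and d="\<lambda>K. cf (iv K)"])
          show "\<forall>K\<in>(\<lambda>G. G \<inter> H) ` S'. defining_form H (cf (iv K)) K" using rd ivf by auto
          show "G \<inter> H \<in> (\<lambda>G. G \<inter> H) ` S'" using that by simp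
          show "\<forall>x\<in>H. (\<Sum>K\<in>(\<lambda>G. G \<inter> H) ` S'. b (iv K) * lform (cf (iv K)) x) = 0"
          proof
            fix x assume xH: "x \<in> H"
            have "(\<Sum>K\<in>(\<lambda>G. G \<inter> H) ` S'. b (iv K) * lform (cf (iv K)) x) = (\<Sum>K\<in>S'. b K * lform (cf K) x)"
              unfolding reidx by (rule sum.cong) (auto simp: ivf)
            also have "\<dots> = 0"
            proof -
              have "lform (cf H) x = 0" using xH Hk by blast
              thus ?thesis using h hs[of x] by simp
            qed
            finally show "(\<Sum>K\<in>(\<lambda>G. G \<inter> H) ` S'. b (iv K) * lform (cf (iv K)) x) = 0" .
          qed
        qed
        thus ?thesis using ivf that by simp
      qed
      have "(\<Sum>K\<in>S'. b K * lform (cf K) x) = 0" for x using bS by simp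
      hence "b H * lform (cf H) y0 = 0" using h hs[of y0] by simp
      hence "b H = 0" using y0 by simp
      thus "\<forall>K\<in>insert H S'. b K = 0" using bS by blast
    qed
  qed
qed

lemma three_dep':
  assumes "hyperplane_of UNIV G1" "hyperplane_of UNIV G2" "hyperplane_of UNIV H"
    and "G1 \<noteq> G2" "G1 \<noteq> H" "G2 \<noteq> H" "G1 \<inter> H = G2 \<inter> H"
  shows "\<not> indep_hyps UNIV {G1, G2, H}"
  using assms three_dep unfolding hyperplane_of_def by metis

lemma indep_empty: "indep_hyps W {}"
  unfolding indep_hyps_def by simp

lemma BCB_alt:
  assumes "\<forall>K\<in>B. hyperplane_of W K"
  shows "S \<in> BCB k \<tau> W B \<longleftrightarrow> (S \<in> Or k W B \<and> sorted_wrt (\<lambda>x y. \<tau> x < \<tau> y) S \<and>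
        (\<forall>G\<in>B - set S. indep_hyps W ({G} \<union> {Hi \<in> set S. \<tau> Hi > \<tau> G})))"
proof (cases "k = 0")
  case True
  have "indep_hyps W {G}" if "G \<in> B" for G
    using assms that indep_single unfolding hyperplane_of_def by blast
  thus ?thesis using True by (auto simp: BCB_def Or_def indep_empty)
qed (simp add: BCB_def)

locale bcb_ctx =
  fixes A :: "(complex^'n) set set" and H :: "(complex^'n) set" and \<sigma> :: "(complex^'n) set \<Rightarrow> nat"
  assumes arr: "is_arrangement UNIV A" and HA: "H \<in> A" and ordg: "is_ordering \<sigma> A"
    and comp: "compatible \<sigma> A H"
begin

abbreviation "L \<equiv> lift_min \<sigma> A H"
abbreviation "R \<equiv> restr_arr A H"
abbreviation "\<tau> \<equiv> induced_ord \<sigma> A H"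

lemma hypA: "G \<in> A \<Longrightarrow> hyperplane_of UNIV G"
  using arr unfolding is_arrangement_def by blast

lemma finA: "finite A" using arr unfolding is_arrangement_def by blast

lemma inj_sig: "inj_on \<sigma> A" using ordg unfolding is_ordering_def by (rule bij_betw_imp_inj_on)

lemma sig_le: "G \<in> A \<Longrightarrow> \<sigma> G \<le> \<sigma> H"
  using ordg comp unfolding is_ordering_def compatible_def
  by (metis atLeastAtMost_iff bij_betw_apply)

lemma sig_lt: "G \<in> A \<Longrightarrow> G \<noteq> H \<Longrightarrow> \<sigma> G < \<sigma> H"
  using sig_le inj_sig HA by (metis inj_on_eq_iff le_neq_implies_less)

lemma sig_eq: "G \<in> A \<Longrightarrow> G' \<in> A \<Longrightarrow> \<sigma> G = \<sigma> G' \<Longrightarrow> G = G'"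
  using inj_sig by (meson inj_on_eq_iff)

lemma finR: "finite R" unfolding restr_arr_def using finA by simp

lemma L_props:
  assumes "K \<in> R"
  shows "L K \<in> A - {H}" "L K \<inter> H = K" "\<And>G. G \<in> A - {H} \<Longrightarrow> G \<inter> H = K \<Longrightarrow> \<sigma> (L K) \<le> \<sigma> G"
proof -
  obtain G0 where G0: "G0 \<in> A - {H}" "K = G0 \<inter> H" using assms unfolding restr_arr_def by blast
  have P: "(\<lambda>H''. H'' \<in> A - {H} \<and> H'' \<inter> H = K) G0" using G0 by simp
  note al = arg_min_nat_lemma[of "\<lambda>H''. H'' \<in> A - {H} \<and> H'' \<inter> H = K", OF P, of \<sigma>]
  show "L K \<in> A - {H}" "L K \<inter> H = K" using al unfolding lift_min_def by auto
  show "\<And>G. G \<in> A - {H} \<Longrightarrow> G \<inter> H = K \<Longrightarrow> \<sigma> (L K) \<le> \<sigma> G"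
    using al unfolding lift_min_def by auto
qed

lemma pi_R: "G \<in> A - {H} \<Longrightarrow> G \<inter> H \<in> R" unfolding restr_arr_def by blast

lemma ord_mono:
  assumes "K \<in> R" "K' \<in> R" "\<sigma> (L K) \<le> \<sigma> (L K')"
  shows "\<tau> K \<le> \<tau> K'"
  unfolding induced_ord_def by (rule card_mono) (use finR assms in auto)

lemma ord_strict:
  assumes "K \<in> R" "K' \<in> R" "\<sigma> (L K) < \<sigma> (L K')"
  shows "\<tau> K < \<tau> K'"
  unfolding induced_ord_def
proof (rule psubset_card_mono)
  show "finite {K'' \<in> R. \<sigma> (L K'') \<le> \<sigma> (L K')}" using finR by simp
  have "K' \<in> {K'' \<in> R. \<sigma> (L K'') \<le> \<sigma> (L K')}" "K' \<notin> {K'' \<in> R. \<sigma> (L K'') \<le> \<sigma> (L K)}"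
    using assms by auto
  moreover have "{K'' \<in> R. \<sigma> (L K'') \<le> \<sigma> (L K)} \<subseteq> {K'' \<in> R. \<sigma> (L K'') \<le> \<sigma> (L K')}"
    using assms by auto
  ultimately show "{K'' \<in> R. \<sigma> (L K'') \<le> \<sigma> (L K)} \<subset> {K'' \<in> R. \<sigma> (L K'') \<le> \<sigma> (L K')}"
    by blast
qed

lemma ord_iff:
  assumes "K \<in> R" "K' \<in> R"
  shows "\<tau> K < \<tau> K' \<longleftrightarrow> \<sigma> (L K) < \<sigma> (L K')"
  using ord_mono[OF assms(2,1)] ord_strict[OF assms] by (meson not_le)

lemma hypR: "K \<in> R \<Longrightarrow> hyperplane_of H K"
proof -
  assume "K \<in> R"
  then obtain G where G: "G \<in> A - {H}" "K = G \<inter> H" unfolding restr_arr_def by blast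
  obtain cG cH where "defining_form UNIV cG G" "defining_form UNIV cH H"
    using hypA[of G] hypA[OF HA] G unfolding hyperplane_of_def by auto
  thus ?thesis using restr_def_form G unfolding hyperplane_of_def by blast
qed

lemma indep_H: "indep_hyps UNIV {H}"
  using hypA[OF HA] indep_single unfolding hyperplane_of_def by blast


lemma hypA': "\<forall>K\<in>A. hyperplane_of UNIV K" using hypA by blast
lemma hypAH: "\<forall>K\<in>A - {H}. hyperplane_of UNIV K" using hypA by blast
lemma hypR': "\<forall>K\<in>R. hyperplane_of H K" using hypR by blast

lemma part1:
  assumes "S \<in> BCB k \<sigma> UNIV (A - {H})"
  shows "S \<in> BCB k \<sigma> UNIV A"
proof -
  have S: "S \<in> Or k UNIV (A - {H})" "sorted_wrt (\<lambda>x y. \<sigma> x < \<sigma> y) S"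
    "\<forall>G\<in>(A - {H}) - set S. indep_hyps UNIV ({G} \<union> {Hi \<in> set S. \<sigma> Hi > \<sigma> G})"
    using assms BCB_alt[OF hypAH] by blast+
  have sub: "set S \<subseteq> A - {H}" using S(1) unfolding Or_def by blast
  have "{H} \<union> {Hi \<in> set S. \<sigma> Hi > \<sigma> H} = {H}" using sub sig_le by fastforce
  hence "indep_hyps UNIV ({H} \<union> {Hi \<in> set S. \<sigma> Hi > \<sigma> H})" using indep_H by metis
  hence "\<forall>G\<in>A - set S. indep_hyps UNIV ({G} \<union> {Hi \<in> set S. \<sigma> Hi > \<sigma> G})"
    using S(3) by blast
  moreover have "S \<in> Or k UNIV A" using S(1) unfolding Or_def by blast
  ultimately show ?thesis using S(2) BCB_alt[OF hypA'] by blast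
qed

lemma part2:
  assumes "S \<in> BCB k \<sigma> UNIV A" "H \<notin> set S"
  shows "S \<in> BCB k \<sigma> UNIV (A - {H})"
proof -
  have S: "S \<in> Or k UNIV A" "sorted_wrt (\<lambda>x y. \<sigma> x < \<sigma> y) S"
    "\<forall>G\<in>A - set S. indep_hyps UNIV ({G} \<union> {Hi \<in> set S. \<sigma> Hi > \<sigma> G})"
    using assms BCB_alt[OF hypA'] by blast+
  have "S \<in> Or k UNIV (A - {H})" using S(1) assms(2) unfolding Or_def by blast
  thus ?thesis using S BCB_alt[OF hypAH] by blast
qed


lemma part4:
  assumes k: "k \<ge> 1" and Ks: "Ks \<in> BCB (k - 1) \<tau> H R"
  shows "map L Ks @ [H] \<in> BCB k \<sigma> UNIV A"
proof -
  have K: "length Ks = k - 1" "distinct Ks" "set Ks \<subseteq> R" "indep_hyps H (set Ks)"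
    "sorted_wrt (\<lambda>x y. \<tau> x < \<tau> y) Ks"
    "\<forall>K\<in>R - set Ks. indep_hyps H ({K} \<union> {K' \<in> set Ks. \<tau> K' > \<tau> K})"
  proof -
    have "Ks \<in> Or (k - 1) H R \<and> sorted_wrt (\<lambda>x y. \<tau> x < \<tau> y) Ks \<and>
        (\<forall>K\<in>R - set Ks. indep_hyps H ({K} \<union> {K' \<in> set Ks. \<tau> K' > \<tau> K}))"
      using Ks BCB_alt[OF hypR', of Ks "k - 1" \<tau>] by simp
    thus "length Ks = k - 1" "distinct Ks" "set Ks \<subseteq> R" "indep_hyps H (set Ks)"
      "sorted_wrt (\<lambda>x y. \<tau> x < \<tau> y) Ks"
      "\<forall>K\<in>R - set Ks. indep_hyps H ({K} \<union> {K' \<in> set Ks. \<tau> K' > \<tau> K})"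
      unfolding Or_def by simp_all
  qed
  define S0 where "S0 = map L Ks"
  have LK: "L K \<in> A - {H}" "L K \<inter> H = K" if "K \<in> set Ks" for K
    using L_props(1,2)[of K] K(3) that by auto
  have setS0: "set S0 = L ` set Ks" unfolding S0_def by simp
  have S0A: "set S0 \<subseteq> A - {H}" unfolding setS0 using LK(1) by (rule image_subsetI)
  have injL: "inj_on L (set Ks)"
  proof (rule inj_onI)
    fix x y assume "x \<in> set Ks" "y \<in> set Ks" "L x = L y"
    thus "x = y" using LK(2)[of x] LK(2)[of y] by metis
  qed
  have injpi: "inj_on (\<lambda>G. G \<inter> H) (set S0)"
  proof (rule inj_onI)
    fix x y assume "x \<in> set S0" "y \<in> set S0" "x \<inter> H = y \<inter> H"
    then obtain x' y' where "x' \<in> set Ks" "y' \<in> set Ks" "x = L x'" "y = L y'" "x \<inter> H = y \<inter> H"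
      unfolding setS0 by blast
    thus "x = y" using LK(2)[of x'] LK(2)[of y'] by metis
  qed
  have pis: "(\<lambda>G. G \<inter> H) ` set S0 = set Ks"
  proof -
    have "(\<lambda>G. G \<inter> H) ` set S0 = (\<lambda>K. L K \<inter> H) ` set Ks" unfolding setS0 image_image ..
    also have "\<dots> = (\<lambda>K. K) ` set Ks" by (rule image_cong) (simp_all add: LK(2))
    finally show ?thesis by simp
  qed
  have finS0: "finite (set S0)" by simp
  have hypS0: "\<forall>G\<in>set S0. hyperplane_of UNIV G" using S0A hypA by blast
  have nH: "H \<notin> set S0" using S0A by blast
  have setS: "set (S0 @ [H]) = insert H (set S0)" by simp
  have ind: "indep_hyps UNIV (set (S0 @ [H]))"
    unfolding setS using lift_indep[OF hypS0 hypA[OF HA] nH finS0 injpi] pis K(4) by simp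
  have dist: "distinct (S0 @ [H])"
  proof -
    have "distinct S0" unfolding S0_def distinct_map using K(2) injL by simp
    thus ?thesis using nH by simp
  qed
  have len: "length (S0 @ [H]) = k" using K(1) k by (simp add: S0_def)
  have sS0: "sorted_wrt (\<lambda>x y. \<sigma> x < \<sigma> y) S0"
    unfolding S0_def sorted_wrt_map
    by (rule sorted_wrt_mono_rel[OF _ K(5)]) (use ord_iff K(3) in blast)
  have srt: "sorted_wrt (\<lambda>x y. \<sigma> x < \<sigma> y) (S0 @ [H])"
    unfolding sorted_wrt_append
  proof (intro conjI ballI)
    fix x y assume "x \<in> set S0" "y \<in> set [H]"
    thus "\<sigma> x < \<sigma> y" using S0A sig_lt by auto
  qed (use sS0 in simp_all)
  have nbc: "indep_hyps UNIV ({G} \<union> {Hi \<in> set (S0 @ [H]). \<sigma> Hi > \<sigma> G})"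
    if G: "G \<in> A - set (S0 @ [H])" for G
  proof -
    have GA: "G \<in> A - {H}" using G by auto
    define K where "K = G \<inter> H"
    have KR: "K \<in> R" unfolding K_def using pi_R[OF GA] .
    have LKle: "\<sigma> (L K) \<le> \<sigma> G" using L_props(3)[OF KR GA] K_def by simp
    define S' where "S' = insert G {Hi \<in> set S0. \<sigma> Hi > \<sigma> G}"
    have sGH: "\<sigma> G < \<sigma> H" using sig_lt GA by blast
    have eq: "{G} \<union> {Hi \<in> set (S0 @ [H]). \<sigma> Hi > \<sigma> G} = insert H S'"
      unfolding S'_def using sGH by (simp only: setS) blast
    have hypS': "\<forall>G\<in>S'. hyperplane_of UNIV G" using hypS0 GA hypA unfolding S'_def by blast
    have nHS': "H \<notin> S'" using nH GA unfolding S'_def by blast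
    have finS': "finite S'" unfolding S'_def by simp
    have injS': "inj_on (\<lambda>G. G \<inter> H) S'"
      unfolding S'_def inj_on_insert
    proof
      show "inj_on (\<lambda>G. G \<inter> H) {Hi \<in> set S0. \<sigma> G < \<sigma> Hi}" using injpi by (rule inj_on_subset) blast
      show "G \<inter> H \<notin> (\<lambda>G. G \<inter> H) ` ({Hi \<in> set S0. \<sigma> G < \<sigma> Hi} - {G})"
      proof
        assume "G \<inter> H \<in> (\<lambda>G. G \<inter> H) ` ({Hi \<in> set S0. \<sigma> G < \<sigma> Hi} - {G})"
        then obtain K' where K': "K' \<in> set Ks" "\<sigma> G < \<sigma> (L K')" "G \<inter> H = L K' \<inter> H"
          unfolding setS0 by auto
        hence "K' = K" using LK K_def by simp
        thus False using K' LKle by simp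
      qed
    qed
    have piS': "(\<lambda>G. G \<inter> H) ` S' = insert K {K' \<in> set Ks. \<sigma> (L K') > \<sigma> G}"
    proof -
      have "(\<lambda>G. G \<inter> H) ` {Hi \<in> set S0. \<sigma> Hi > \<sigma> G} = (\<lambda>G. G \<inter> H) ` L ` {K' \<in> set Ks. \<sigma> (L K') > \<sigma> G}"
        unfolding setS0 by blast
      also have "\<dots> = (\<lambda>K'. K') ` {K' \<in> set Ks. \<sigma> (L K') > \<sigma> G}"
        unfolding image_image by (rule image_cong) (simp_all add: LK(2))
      also have "\<dots> = {K' \<in> set Ks. \<sigma> (L K') > \<sigma> G}" by simp
      finally show ?thesis unfolding S'_def K_def by simp
    qed
    have "indep_hyps H ((\<lambda>G. G \<inter> H) ` S')"
    proof (cases "K \<in> set Ks")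
      case True
      show ?thesis unfolding piS' by (rule indep_subset[OF K(4)]) (use True in blast)
    next
      case False
      have i: "indep_hyps H ({K} \<union> {K' \<in> set Ks. \<tau> K' > \<tau> K})" using K(6) KR False by blast
      show ?thesis unfolding piS'
      proof (rule indep_subset[OF i])
        show "insert K {K' \<in> set Ks. \<sigma> G < \<sigma> (L K')} \<subseteq> {K} \<union> {K' \<in> set Ks. \<tau> K < \<tau> K'}"
        proof
          fix x assume x: "x \<in> insert K {K' \<in> set Ks. \<sigma> G < \<sigma> (L K')}"
          show "x \<in> {K} \<union> {K' \<in> set Ks. \<tau> K < \<tau> K'}"
          proof (cases "x = K")
            case False
            hence "x \<in> set Ks" "\<sigma> G < \<sigma> (L x)" using x by auto
            moreover have "x \<in> R" using K(3) \<open>x \<in> set Ks\<close> by blast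
            ultimately have "\<tau> K < \<tau> x" using ord_iff[OF KR] LKle by simp
            thus ?thesis using \<open>x \<in> set Ks\<close> by simp
          qed simp
        qed
      qed
    qed
    hence "indep_hyps UNIV (insert H S')" using lift_indep[OF hypS' hypA[OF HA] nHS' finS' injS'] by simp
    thus ?thesis using eq by simp
  qed
  have "set (S0 @ [H]) \<subseteq> A" using S0A HA by auto
  hence "S0 @ [H] \<in> Or k UNIV A" using len dist ind unfolding Or_def by blast
  hence "S0 @ [H] \<in> BCB k \<sigma> UNIV A" using srt nbc BCB_alt[OF hypA'] by blast
  thus ?thesis unfolding S0_def .
qed


lemma part3:
  assumes k: "k \<ge> 1" and SB: "S \<in> BCB k \<sigma> UNIV A" and HS: "H \<in> set S"
  shows "\<exists>Ks. S = map L Ks @ [H] \<and> Ks \<in> BCB (k - 1) \<tau> H R"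
proof -
  have S: "length S = k" "distinct S" "set S \<subseteq> A" "indep_hyps UNIV (set S)"
    "sorted_wrt (\<lambda>x y. \<sigma> x < \<sigma> y) S"
    "\<forall>G\<in>A - set S. indep_hyps UNIV ({G} \<union> {Hi \<in> set S. \<sigma> Hi > \<sigma> G})"
  proof -
    have "S \<in> Or k UNIV A \<and> sorted_wrt (\<lambda>x y. \<sigma> x < \<sigma> y) S \<and>
        (\<forall>G\<in>A - set S. indep_hyps UNIV ({G} \<union> {Hi \<in> set S. \<sigma> Hi > \<sigma> G}))"
      using SB BCB_alt[OF hypA', of S k \<sigma>] by simp
    thus "length S = k" "distinct S" "set S \<subseteq> A" "indep_hyps UNIV (set S)"
      "sorted_wrt (\<lambda>x y. \<sigma> x < \<sigma> y) S"
      "\<forall>G\<in>A - set S. indep_hyps UNIV ({G} \<union> {Hi \<in> set S. \<sigma> Hi > \<sigma> G})"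
      unfolding Or_def by simp_all
  qed
  define S0 where "S0 = butlast S"
  have Sne: "S \<noteq> []" using HS by auto
  have Sdec: "S = S0 @ [last S]" unfolding S0_def using Sne by simp
  have lastH: "last S = H"
  proof (rule ccontr)
    assume ne: "last S \<noteq> H"
    have "set S = set (S0 @ [last S])" using Sdec by (rule arg_cong)
    hence "H \<in> set S0" using HS ne by simp
    moreover have "sorted_wrt (\<lambda>x y. \<sigma> x < \<sigma> y) (S0 @ [last S])" using S(5) Sdec by simp
    ultimately have "\<sigma> H < \<sigma> (last S)" unfolding sorted_wrt_append by simp
    moreover have "last S \<in> A" using S(3) Sne last_in_set by blast
    ultimately show False using sig_le by fastforce
  qed
  have SS0: "S = S0 @ [H]" using Sdec lastH by simp
  have setS: "set S = insert H (set S0)" using SS0 by simp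
  have nH: "H \<notin> set S0" using S(2) SS0 by simp
  have S0A: "set S0 \<subseteq> A - {H}" using S(3) setS nH by blast
  have hypS0: "\<forall>G\<in>set S0. hyperplane_of UNIV G" using S0A hypA by blast
  have sS0: "sorted_wrt (\<lambda>x y. \<sigma> x < \<sigma> y) S0" using S(5) SS0 sorted_wrt_append by metis
  have injpi: "inj_on (\<lambda>G. G \<inter> H) (set S0)"
  proof (rule inj_onI)
    fix x y assume xy: "x \<in> set S0" "y \<in> set S0" "x \<inter> H = y \<inter> H"
    show "x = y"
    proof (rule ccontr)
      assume "x \<noteq> y"
      moreover have "x \<noteq> H" "y \<noteq> H" using xy nH by auto
      ultimately have "\<not> indep_hyps UNIV {x, y, H}"
        using three_dep'[of x y H] hypS0 hypA[OF HA] xy by blast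
      moreover have "{x, y, H} \<subseteq> set S" using xy setS by blast
      ultimately show False using indep_subset S(4) by blast
    qed
  qed
  have LpG: "L (G \<inter> H) = G" if GS0: "G \<in> set S0" for G
  proof (rule ccontr)
    assume ne: "L (G \<inter> H) \<noteq> G"
    define K where "K = G \<inter> H"
    have GA: "G \<in> A - {H}" using GS0 S0A by blast
    have KR: "K \<in> R" unfolding K_def by (rule pi_R[OF GA])
    define G' where "G' = L K"
    have G'A: "G' \<in> A - {H}" "G' \<inter> H = K" using L_props(1,2)[OF KR] G'_def by auto
    have "\<sigma> G' \<le> \<sigma> G" using L_props(3)[OF KR GA] K_def G'_def by simp
    moreover have "G' \<noteq> G" using ne G'_def K_def by simp
    ultimately have lt: "\<sigma> G' < \<sigma> G"
    proof -
      have "\<sigma> G' \<noteq> \<sigma> G"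
      proof
        assume "\<sigma> G' = \<sigma> G"
        hence "G' = G" using sig_eq[of G' G] G'A(1) GA by blast
        thus False using \<open>G' \<noteq> G\<close> by simp
      qed
      thus ?thesis using \<open>\<sigma> G' \<le> \<sigma> G\<close> by simp
    qed
    have "G' \<notin> set S0"
    proof
      assume "G' \<in> set S0"
      hence "G' = G" using inj_onD[OF injpi _ \<open>G' \<in> set S0\<close> GS0] G'A(2) K_def by blast
      thus False using \<open>G' \<noteq> G\<close> by simp
    qed
    hence "G' \<in> A - set S" using G'A setS by blast
    hence i: "indep_hyps UNIV ({G'} \<union> {Hi \<in> set S. \<sigma> Hi > \<sigma> G'})" using S(6) by blast
    have G'H: "\<sigma> G' < \<sigma> H" using sig_lt G'A(1) by blast
    have "G \<in> set S" "H \<in> set S" using GS0 setS by auto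
    hence "{G', G, H} \<subseteq> {G'} \<union> {Hi \<in> set S. \<sigma> Hi > \<sigma> G'}"
      using lt G'H by blast
    hence "indep_hyps UNIV {G', G, H}" using indep_subset[OF i] by blast
    moreover have "\<not> indep_hyps UNIV {G', G, H}"
    proof (rule three_dep')
      show "hyperplane_of UNIV G'" "hyperplane_of UNIV G" "hyperplane_of UNIV H"
        using hypA G'A(1) GA HA by auto
      show "G' \<noteq> G" by fact
      show "G' \<noteq> H" "G \<noteq> H" using G'A(1) GA by auto
      show "G' \<inter> H = G \<inter> H" using G'A(2) K_def by simp
    qed
    ultimately show False by blast
  qed
  define Ks where "Ks = map (\<lambda>G. G \<inter> H) S0"
  have S0eq: "map L Ks = S0" unfolding Ks_def map_map by (rule map_idI) (simp add: LpG)
  have setKs: "set Ks = (\<lambda>G. G \<inter> H) ` set S0" unfolding Ks_def by simp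
  have KsR: "set Ks \<subseteq> R" unfolding setKs using S0A pi_R by blast
  have lenKs: "length Ks = k - 1" using S(1) SS0 Ks_def by simp
  have distKs: "distinct Ks" unfolding Ks_def distinct_map using injpi S(2) SS0 by simp
  have indKs: "indep_hyps H (set Ks)"
    unfolding setKs using lift_indep[OF hypS0 hypA[OF HA] nH _ injpi] S(4) setS by simp
  have sKs: "sorted_wrt (\<lambda>x y. \<tau> x < \<tau> y) Ks"
    unfolding Ks_def sorted_wrt_map
  proof (rule sorted_wrt_mono_rel[OF _ sS0])
    fix x y assume xy: "x \<in> set S0" "y \<in> set S0" "\<sigma> x < \<sigma> y"
    have "x \<inter> H \<in> R" "y \<inter> H \<in> R" using xy S0A pi_R by blast+
    thus "\<tau> (x \<inter> H) < \<tau> (y \<inter> H)" using ord_iff LpG xy by simp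
  qed
  have nbcKs: "indep_hyps H ({K} \<union> {K' \<in> set Ks. \<tau> K' > \<tau> K})" if KR: "K \<in> R - set Ks" for K
  proof -
    define G where "G = L K"
    have GA: "G \<in> A - {H}" "G \<inter> H = K" using L_props(1,2) KR G_def by auto
    have GS0: "G \<notin> set S0"
    proof
      assume "G \<in> set S0"
      hence "G \<inter> H \<in> set Ks" unfolding setKs by (rule imageI)
      thus False using GA(2) KR by simp
    qed
    hence "G \<in> A - set S" using GA setS by blast
    hence i: "indep_hyps UNIV ({G} \<union> {Hi \<in> set S. \<sigma> Hi > \<sigma> G})" using S(6) by blast
    define S' where "S' = insert G {Hi \<in> set S0. \<sigma> Hi > \<sigma> G}"
    have sGH: "\<sigma> G < \<sigma> H" using sig_lt GA by blast
    have eq: "{G} \<union> {Hi \<in> set S. \<sigma> Hi > \<sigma> G} = insert H S'"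
      unfolding S'_def using sGH by (simp only: setS) blast
    have hypS': "\<forall>G\<in>S'. hyperplane_of UNIV G" using hypS0 GA hypA unfolding S'_def by blast
    have nHS': "H \<notin> S'" using nH GA unfolding S'_def by blast
    have finS': "finite S'" unfolding S'_def by simp
    have injS': "inj_on (\<lambda>G. G \<inter> H) S'"
      unfolding S'_def inj_on_insert
    proof
      show "inj_on (\<lambda>G. G \<inter> H) {Hi \<in> set S0. \<sigma> G < \<sigma> Hi}" using injpi by (rule inj_on_subset) blast
      show "G \<inter> H \<notin> (\<lambda>G. G \<inter> H) ` ({Hi \<in> set S0. \<sigma> G < \<sigma> Hi} - {G})"
      proof
        assume "G \<inter> H \<in> (\<lambda>G. G \<inter> H) ` ({Hi \<in> set S0. \<sigma> G < \<sigma> Hi} - {G})"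
        hence "G \<inter> H \<in> (\<lambda>G. G \<inter> H) ` set S0" by blast
        thus False using GA(2) KR setKs by simp
      qed
    qed
    have "indep_hyps H ((\<lambda>G. G \<inter> H) ` S')"
      using lift_indep[OF hypS' hypA[OF HA] nHS' finS' injS'] i eq by simp
    moreover have "{K} \<union> {K' \<in> set Ks. \<tau> K' > \<tau> K} \<subseteq> (\<lambda>G. G \<inter> H) ` S'"
    proof
      fix x assume x: "x \<in> {K} \<union> {K' \<in> set Ks. \<tau> K' > \<tau> K}"
      show "x \<in> (\<lambda>G. G \<inter> H) ` S'"
      proof (cases "x = K")
        case True
        have "G \<in> S'" unfolding S'_def by simp
        hence "G \<inter> H \<in> (\<lambda>G. G \<inter> H) ` S'" by (rule imageI)
        thus ?thesis using True GA(2) by simp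
      next
        case False
        hence xs: "x \<in> set Ks" "\<tau> x > \<tau> K" using x by auto
        then obtain Hi where Hi: "Hi \<in> set S0" "x = Hi \<inter> H" using setKs by blast
        have "x \<in> R" using KsR xs by blast
        hence "\<sigma> (L K) < \<sigma> (L x)" using ord_iff[of K x] KR xs(2) by simp
        moreover have "L x = Hi" using LpG[OF Hi(1)] Hi(2) by simp
        ultimately have "\<sigma> G < \<sigma> Hi" unfolding G_def by simp
        hence "Hi \<in> S'" using Hi(1) unfolding S'_def by simp
        hence "Hi \<inter> H \<in> (\<lambda>G. G \<inter> H) ` S'" by (rule imageI)
        thus ?thesis using Hi(2) by simp
      qed
    qed
    ultimately show ?thesis by (rule indep_subset)
  qed
  have "Ks \<in> Or (k - 1) H R" unfolding Or_def using lenKs distKs KsR indKs by blast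
  hence "Ks \<in> BCB (k - 1) \<tau> H R" using sKs nbcKs BCB_alt[OF hypR'] by blast
  thus ?thesis using S0eq SS0 by blast
qed


lemma main_eq:
  assumes k: "k \<ge> 1"
  shows "BCB k \<sigma> UNIV A =
           BCB k \<sigma> UNIV (A - {H}) \<union>
           {map L Ks @ [H] | Ks. Ks \<in> BCB (k - 1) \<tau> H R}"
proof (intro equalityI subsetI)
  fix S assume S: "S \<in> BCB k \<sigma> UNIV A"
  show "S \<in> BCB k \<sigma> UNIV (A - {H}) \<union> {map L Ks @ [H] | Ks. Ks \<in> BCB (k - 1) \<tau> H R}"
  proof (cases "H \<in> set S")
    case True
    then obtain Ks where "S = map L Ks @ [H]" "Ks \<in> BCB (k - 1) \<tau> H R" using part3[OF k S] by blast
    thus ?thesis by blast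
  next
    case False
    thus ?thesis using part2[OF S] by blast
  qed
next
  fix S assume S: "S \<in> BCB k \<sigma> UNIV (A - {H}) \<union> {map L Ks @ [H] | Ks. Ks \<in> BCB (k - 1) \<tau> H R}"
  thus "S \<in> BCB k \<sigma> UNIV A" using part1 part4[OF k] by blast
qed

end


theorem mainTheorem5:
  fixes A :: "(complex^'n) set set" and H :: "(complex^'n) set"
    and \<sigma> :: "(complex^'n) set \<Rightarrow> nat" and k :: nat
  assumes "is_arrangement UNIV A"
    and "H \<in> A"
    and "is_ordering \<sigma> A"
    and "compatible \<sigma> A H"
    and "k \<ge> 1"
  shows "BCB k \<sigma> UNIV A =
           BCB k \<sigma> UNIV (A - {H}) \<union>
           {map (lift_min \<sigma> A H) Ks @ [H] | Ks. Ks \<in> BCB (k - 1) (induced_ord \<sigma> A H) H (restr_arr A H)}"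
proof -
  interpret bcb_ctx A H \<sigma> by unfold_locales (use assms in auto)
  show ?thesis using main_eq[OF assms(5)] .
qed

end
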